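(* Let $n\ge2$, $k\ge2$, let $M$ be a smooth closed manifold, and let $\rho_0\in\mathrm{Hom}(\Gamma_{n,k},\mathrm{Diff}(M))$. Suppose $\rho_0$ has a global fixed point $p_0$ with $(D\rho_0^a)_{p_0}=k^{-1}I$ and $(D\rho_0^{b_i})_{p_0}=I$ for all $i=1,\dots,n$. Then there exist a neighborhood $\mathcal{U}$ of $\rho_0$ in $\mathrm{Hom}(\Gamma_{n,k},\mathrm{Diff}(M))$ and a continuous map $\hat p:\mathcal{U}\to M$ such that $\hat p(\rho_0)=p_0$ and $\hat p(\rho)$ is a global fixed point of $\rho$ for every $\rho\in\mathcal{U}$.
   Context: $\Gamma_{n,k} = \langle a, b_1,\dots,b_n \mid a b_i a^{-1} = b_i^k,\ b_i b_j = b_j b_i\rangle$. $\mathrm{Diff}(M)$ carries the $C^\infty$ topology and $\mathrm{Hom}(\Gamma_{n,k},\mathrm{Diff}(M))$ the induced product topology; $\rho^\gamma=\rho(\gamma)$. A global fixed point of $\rho$ is a point fixed by all $\rho^\gamma$. $I$ denotes the identity of $T_{p_0}M$. *)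

theory Defs
  imports "HOL-Analysis.Analysis"
begin

definition pd :: "'a::real_normed_vector \<Rightarrow> ('a \<Rightarrow> 'b::real_normed_vector) \<Rightarrow> 'a \<Rightarrow> 'b" where
  "pd v f x = vector_derivative (\<lambda>t::real. f (x + t *\<^sub>R v)) (at 0)"

fun dpart :: "'a::real_normed_vector list \<Rightarrow> ('a \<Rightarrow> 'b::real_normed_vector) \<Rightarrow> 'a \<Rightarrow> 'b" where
  "dpart [] f = f"
| "dpart (v # vs) f = pd v (dpart vs f)"

definition smooth_on :: "'a::euclidean_space set \<Rightarrow> ('a \<Rightarrow> 'b::euclidean_space) \<Rightarrow> bool" where
  "smooth_on U f \<longleftrightarrow> open U \<and>
     (\<forall>vs. set vs \<subseteq> Basis \<longrightarrow>
        continuous_on U (dpart vs f) \<and>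
        (\<forall>v\<in>Basis. \<forall>x\<in>U. (\<lambda>t::real. dpart vs f (x + t *\<^sub>R v)) differentiable (at 0)))"

definition chart :: "'e::euclidean_space set \<Rightarrow> ('d::euclidean_space \<Rightarrow> 'e) \<Rightarrow> 'd set \<Rightarrow> bool" where
  "chart M \<phi> V \<longleftrightarrow> open V \<and> smooth_on V \<phi> \<and> \<phi> ` V \<subseteq> M \<and>
     openin (top_of_set M) (\<phi> ` V) \<and> (\<exists>\<psi>. homeomorphism V (\<phi> ` V) \<phi> \<psi>) \<and>
     (\<forall>u\<in>V. inj (frechet_derivative \<phi> (at u)))"

definition submanifold :: "'d::euclidean_space itself \<Rightarrow> 'e::euclidean_space set \<Rightarrow> bool" where
  "submanifold (_::'d itself) M \<longleftrightarrow> (\<forall>p\<in>M. \<exists>(\<phi>::'d \<Rightarrow> 'e) V. chart M \<phi> V \<and> p \<in> \<phi> ` V)"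

definition closed_manifold :: "'d::euclidean_space itself \<Rightarrow> 'e::euclidean_space set \<Rightarrow> bool" where
  "closed_manifold D M \<longleftrightarrow> submanifold D M \<and> compact M"

text \<open>Maps M to M are represented by functions on the ambient space that are the identity
  off M, so that every map of M has exactly one representative.\<close>
definition smooth_self_map :: "'d::euclidean_space itself \<Rightarrow> 'e::euclidean_space set \<Rightarrow> ('e \<Rightarrow> 'e) \<Rightarrow> bool" where
  "smooth_self_map (_::'d itself) M f \<longleftrightarrow> f ` M \<subseteq> M \<and>
     (\<forall>(\<phi>::'d \<Rightarrow> 'e) V. chart M \<phi> V \<longrightarrow> smooth_on V (f \<circ> \<phi>))"

definition Diff :: "'d::euclidean_space itself \<Rightarrow> 'e::euclidean_space set \<Rightarrow> ('e \<Rightarrow> 'e) set" where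
  "Diff D M = {f. (\<forall>x. x \<notin> M \<longrightarrow> f x = x) \<and> bij_betw f M M \<and>
                  smooth_self_map D M f \<and> smooth_self_map D M (inv_into M f)}"

text \<open>The C-infinity topology on Diff(M) (weak = strong since M is compact), given by the
  subbasis of sets of maps whose iterated partial derivatives in a chart are uniformly
  epsilon-close on a compact subset of the chart domain.\<close>
definition Cinf_nbhd :: "'e::euclidean_space set \<Rightarrow> ('e \<Rightarrow> 'e) \<Rightarrow> ('d::euclidean_space \<Rightarrow> 'e) \<Rightarrow> 'd set
                         \<Rightarrow> 'd list \<Rightarrow> real \<Rightarrow> ('e \<Rightarrow> 'e) set" where
  "Cinf_nbhd M f \<phi> K vs \<epsilon> =
     {g. \<forall>u\<in>K. norm (dpart vs (g \<circ> \<phi>) u - dpart vs (f \<circ> \<phi>) u) < \<epsilon>}"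

definition Diff_top :: "'d::euclidean_space itself \<Rightarrow> 'e::euclidean_space set \<Rightarrow> ('e \<Rightarrow> 'e) topology" where
  "Diff_top D M = subtopology
     (topology_generated_by
        {Cinf_nbhd M f \<phi> K vs \<epsilon> | f (\<phi>::'d \<Rightarrow> 'e) V K vs \<epsilon>.
           f \<in> Diff D M \<and> chart M \<phi> V \<and> compact K \<and> K \<subseteq> V \<and> set vs \<subseteq> Basis \<and> \<epsilon> > 0})
     (Diff D M)"

text \<open>A homomorphism rho is encoded by the images of the generators:
  rho 0 = rho(a), rho i = rho(b_i) for 1 \<le> i \<le> n; the defining relations
  a b_i a^-1 = b_i^k (written a o b_i = b_i^k o a) and b_i b_j = b_j b_i must hold.\<close>
definition Hom_top :: "'d::euclidean_space itself \<Rightarrow> 'e::euclidean_space set \<Rightarrow> nat \<Rightarrow> nat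
                       \<Rightarrow> (nat \<Rightarrow> ('e \<Rightarrow> 'e)) topology" where
  "Hom_top D M n k = subtopology (product_topology (\<lambda>_. Diff_top D M) {0..n})
     {\<rho>. (\<forall>i\<in>{1..n}. \<rho> 0 \<circ> \<rho> i = (\<rho> i ^^ k) \<circ> \<rho> 0) \<and>
         (\<forall>i\<in>{1..n}. \<forall>j\<in>{1..n}. \<rho> i \<circ> \<rho> j = \<rho> j \<circ> \<rho> i)}"

text \<open>Global fixed point (it suffices to be fixed by the images of the generators).\<close>
definition global_fixed_point :: "nat \<Rightarrow> (nat \<Rightarrow> ('e \<Rightarrow> 'e)) \<Rightarrow> 'e \<Rightarrow> bool" where
  "global_fixed_point n \<rho> p \<longleftrightarrow> (\<forall>i\<in>{0..n}. \<rho> i p = p)"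

text \<open>(D f)_p = c I on T_p M, expressed in every local parametrization through p.\<close>
definition deriv_scalar_at :: "'d::euclidean_space itself \<Rightarrow> 'e::euclidean_space set \<Rightarrow> ('e \<Rightarrow> 'e) \<Rightarrow> 'e \<Rightarrow> real \<Rightarrow> bool" where
  "deriv_scalar_at (_::'d itself) M f p c \<longleftrightarrow>
     (\<forall>(\<phi>::'d \<Rightarrow> 'e) V u. chart M \<phi> V \<and> u \<in> V \<and> \<phi> u = p \<longrightarrow>
        frechet_derivative (f \<circ> \<phi>) (at u) = (\<lambda>h. c *\<^sub>R frechet_derivative \<phi> (at u) h))"

end

theory Submission imports Defs begin

lemma mvt_1d:
  fixes f :: "real \<Rightarrow> 'b::real_normed_vector"
  assumes der: "\<And>t. t \<in> closed_segment 0 a \<Longrightarrow> (f has_vector_derivative f' t) (at t)"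
    and bd: "\<And>t. t \<in> closed_segment 0 a \<Longrightarrow> norm (f' t - D) \<le> e"
  shows "norm (f a - f 0 - a *\<^sub>R D) \<le> \<bar>a\<bar> * e"
proof -
  define g where "g t = f t - t *\<^sub>R D" for t
  have gd: "(g has_derivative (\<lambda>h. h *\<^sub>R (f' t - D))) (at t within closed_segment 0 a)"
    if "t \<in> closed_segment 0 a" for t
  proof -
    have f1: "(f has_derivative (\<lambda>h. h *\<^sub>R f' t)) (at t)"
      using der[OF that] by (simp add: has_vector_derivative_def)
    have f2: "((\<lambda>t. t *\<^sub>R D) has_derivative (\<lambda>h. h *\<^sub>R D)) (at t)"
      by (rule bounded_linear_imp_has_derivative) (rule bounded_linear_scaleR_left)
    have "(g has_derivative (\<lambda>h. h *\<^sub>R f' t - h *\<^sub>R D)) (at t)"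
      unfolding g_def by (rule has_derivative_diff[OF f1 f2])
    moreover have "(\<lambda>h. h *\<^sub>R f' t - h *\<^sub>R D) = (\<lambda>h. h *\<^sub>R (f' t - D))"
      by (simp add: fun_eq_iff scaleR_diff_right)
    ultimately show ?thesis by (metis has_derivative_at_withinI)
  qed
  have on: "onorm (\<lambda>h::real. h *\<^sub>R (f' t - D)) \<le> e" if "t \<in> closed_segment 0 a" for t
  proof -
    have "onorm (\<lambda>h::real. h *\<^sub>R (f' t - D)) \<le> onorm (\<lambda>h::real. h) * norm (f' t - D)"
      by (rule onorm_scaleR_left_lemma) (rule bounded_linear_ident)
    also have "\<dots> \<le> 1 * norm (f' t - D)"
      by (rule mult_right_mono[OF onorm_id_le norm_ge_zero])
    also have "\<dots> \<le> e" using bd[OF that] by simp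
    finally show ?thesis .
  qed
  have "norm (g a - g 0) \<le> e * norm (a - 0)"
    by (rule differentiable_bound[OF convex_closed_segment gd on]) auto
  then show ?thesis by (simp add: g_def mult.commute diff_diff_eq add.commute)
qed

lemma shift_vd:
  fixes h :: "'a::real_normed_vector \<Rightarrow> 'b::real_normed_vector"
  assumes "((\<lambda>s. h ((w + t *\<^sub>R v) + s *\<^sub>R v)) has_vector_derivative P) (at 0)"
  shows "((\<lambda>s. h (w + s *\<^sub>R v)) has_vector_derivative P) (at t)"
proof -
  have d1: "((\<lambda>s. s - t) has_vector_derivative 1) (at t)"
    by (auto intro!: derivative_eq_intros)
  have "((\<lambda>s. h ((w + t *\<^sub>R v) + s *\<^sub>R v)) \<circ> (\<lambda>s. s - t) has_vector_derivative 1 *\<^sub>R P) (at t)"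
    by (rule vector_diff_chain_at[OF d1]) (simp add: assms)
  moreover have "((\<lambda>s. h ((w + t *\<^sub>R v) + s *\<^sub>R v)) \<circ> (\<lambda>s. s - t)) = (\<lambda>s. h (w + s *\<^sub>R v))"
    by (auto simp: fun_eq_iff algebra_simps)
  ultimately show ?thesis by simp
qed

lemma zS_inner:
  fixes x y :: "'a::euclidean_space"
  assumes "S \<subseteq> Basis" "b \<in> Basis"
  shows "(y + (\<Sum>v\<in>S. ((x - y) \<bullet> v) *\<^sub>R v)) \<bullet> b = (if b \<in> S then x \<bullet> b else y \<bullet> b)"
proof -
  have fin: "finite S" using finite_subset[OF assms(1) finite_Basis] .
  have "(\<Sum>v\<in>S. ((x - y) \<bullet> v) *\<^sub>R v) \<bullet> b = (\<Sum>v\<in>S. ((x - y) \<bullet> v) * (v \<bullet> b))"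
    by (simp add: inner_sum_left)
  also have "\<dots> = (\<Sum>v\<in>S. if v = b then (x - y) \<bullet> v else 0)"
    apply (rule sum.cong, simp)
    using assms by (auto simp: inner_Basis)
  also have "\<dots> = (if b \<in> S then (x - y) \<bullet> b else 0)"
    using fin by (simp add: sum.delta')
  finally show ?thesis by (auto simp: inner_add_left inner_diff_left)
qed

lemma coord_mvt:
  fixes h :: "'a::euclidean_space \<Rightarrow> 'b::real_normed_vector"
  assumes der: "\<And>w v. w \<in> cbox lo hi \<Longrightarrow> v \<in> Basis \<Longrightarrow> ((\<lambda>t. h (w + t *\<^sub>R v)) has_vector_derivative P v w) (at 0)"
    and bd: "\<And>w v. w \<in> cbox lo hi \<Longrightarrow> v \<in> Basis \<Longrightarrow> norm (P v w - \<Lambda> v) \<le> e"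
    and x: "x \<in> cbox lo hi" and y: "y \<in> cbox lo hi"
  shows "norm (h x - h y - (\<Sum>v\<in>Basis. ((x - y) \<bullet> v) *\<^sub>R \<Lambda> v)) \<le> e * (\<Sum>v\<in>Basis. \<bar>(x - y) \<bullet> v\<bar>)"
proof -
  define z where "z S = y + (\<Sum>v\<in>S. ((x - y) \<bullet> v) *\<^sub>R v)" for S
  have zin: "z S \<in> cbox lo hi" if "S \<subseteq> Basis" for S
    using x y that unfolding mem_box z_def
    by (auto simp: zS_inner[OF that])
  have main: "norm (h (z S) - h y - (\<Sum>v\<in>S. ((x-y)\<bullet>v) *\<^sub>R \<Lambda> v)) \<le> e * (\<Sum>v\<in>S. \<bar>(x-y)\<bullet>v\<bar>)"
    if "S \<subseteq> Basis" for S
  proof -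
    have "finite S" using finite_subset[OF that finite_Basis] .
    then show ?thesis using that
    proof (induction S rule: finite_subset_induct')
      case empty
      then show ?case by (simp add: z_def)
    next
      case (insert v S)
      define a where "a = (x - y) \<bullet> v"
      define w where "w = z S"
      have Sb: "S \<subseteq> Basis" using insert by auto
      have zi: "z (insert v S) = w + a *\<^sub>R v"
        using insert by (simp add: z_def w_def a_def algebra_simps)
      have seg: "w + t *\<^sub>R v \<in> cbox lo hi" if t: "t \<in> closed_segment 0 a" for t
        unfolding mem_box
      proof
        fix b :: 'a assume b: "b \<in> Basis"
        show "lo \<bullet> b \<le> (w + t *\<^sub>R v) \<bullet> b \<and> (w + t *\<^sub>R v) \<bullet> b \<le> hi \<bullet> b"
        proof (cases "b = v")
          case True
          have wv: "w \<bullet> v = y \<bullet> v" using zS_inner[OF Sb insert.hyps(2), where x=x and y=y] insert.hyps(4) by (simp add: w_def z_def)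
          have "(w + t *\<^sub>R v) \<bullet> b = y \<bullet> v + t" using True insert wv by (simp add: inner_add_left)
          moreover have "x \<bullet> v = y \<bullet> v + a" by (simp add: a_def inner_diff_left)
          moreover have "lo \<bullet> v \<le> x \<bullet> v \<and> x \<bullet> v \<le> hi \<bullet> v" "lo \<bullet> v \<le> y \<bullet> v \<and> y \<bullet> v \<le> hi \<bullet> v"
            using x y insert by (auto simp: mem_box)
          ultimately show ?thesis using t True by (auto simp: closed_segment_eq_real_ivl split: if_splits)
        next
          case False
          then have "(w + t *\<^sub>R v) \<bullet> b = w \<bullet> b" using b insert by (simp add: inner_add_left inner_Basis)
          then show ?thesis using zin[OF Sb] b by (simp add: w_def mem_box)
        qed
      qed
      have "norm (h (w + a *\<^sub>R v) - h (w + 0 *\<^sub>R v) - a *\<^sub>R \<Lambda> v) \<le> \<bar>a\<bar> * e"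
      proof (rule mvt_1d[where f="\<lambda>t. h (w + t *\<^sub>R v)" and f'="\<lambda>t. P v (w + t *\<^sub>R v)"])
        fix t assume t: "t \<in> closed_segment 0 a"
        show "((\<lambda>t. h (w + t *\<^sub>R v)) has_vector_derivative P v (w + t *\<^sub>R v)) (at t)"
          by (rule shift_vd, rule der[OF seg[OF t]]) (use insert in auto)
        show "norm (P v (w + t *\<^sub>R v) - \<Lambda> v) \<le> e"
          by (rule bd[OF seg[OF t]]) (use insert in auto)
      qed
      then have 1: "norm (h (z (insert v S)) - h (z S) - a *\<^sub>R \<Lambda> v) \<le> \<bar>a\<bar> * e"
        by (simp add: zi w_def)
      have 2: "norm (h (z S) - h y - (\<Sum>v\<in>S. ((x-y)\<bullet>v) *\<^sub>R \<Lambda> v)) \<le> e * (\<Sum>v\<in>S. \<bar>(x-y)\<bullet>v\<bar>)"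
        using insert Sb by auto
      have eq: "h (z (insert v S)) - h y - (\<Sum>v\<in>insert v S. ((x-y)\<bullet>v) *\<^sub>R \<Lambda> v)
          = (h (z (insert v S)) - h (z S) - a *\<^sub>R \<Lambda> v) + (h (z S) - h y - (\<Sum>v\<in>S. ((x-y)\<bullet>v) *\<^sub>R \<Lambda> v))"
        using insert.hyps(1,4) by (simp add: a_def)
      have "norm (h (z (insert v S)) - h y - (\<Sum>v\<in>insert v S. ((x-y)\<bullet>v) *\<^sub>R \<Lambda> v))
          \<le> norm (h (z (insert v S)) - h (z S) - a *\<^sub>R \<Lambda> v) + norm (h (z S) - h y - (\<Sum>v\<in>S. ((x-y)\<bullet>v) *\<^sub>R \<Lambda> v))"
        unfolding eq by (rule norm_triangle_ineq)
      also have "\<dots> \<le> \<bar>a\<bar> * e + e * (\<Sum>v\<in>S. \<bar>(x-y)\<bullet>v\<bar>)"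
        by (rule add_mono[OF 1 2])
      also have "\<dots> = e * (\<Sum>v\<in>insert v S. \<bar>(x-y)\<bullet>v\<bar>)"
        using insert.hyps(1,4) by (simp add: a_def distrib_left mult.commute)
      finally show ?case .
    qed
  qed
  have zB: "z Basis = x" unfolding z_def euclidean_representation by simp
  show ?thesis using main[OF subset_refl] unfolding zB .
qed


definition cube :: "'a::euclidean_space \<Rightarrow> real \<Rightarrow> 'a set" where
  "cube c r = cbox (c - r *\<^sub>R (\<Sum>Basis)) (c + r *\<^sub>R (\<Sum>Basis))"

lemma mem_cube: "w \<in> cube c r \<longleftrightarrow> (\<forall>v\<in>Basis. \<bar>(w - c) \<bullet> v\<bar> \<le> r)"
  unfolding cube_def mem_box
  by (auto simp: inner_diff_left inner_add_left abs_le_iff algebra_simps)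

lemma l1_le: "(\<Sum>v\<in>Basis. \<bar>(h::'a::euclidean_space) \<bullet> v\<bar>) \<le> real DIM('a) * norm h"
proof -
  have "(\<Sum>v\<in>Basis. \<bar>h \<bullet> v\<bar>) \<le> (\<Sum>v\<in>(Basis::'a set). norm h)"
    by (rule sum_mono) (rule Basis_le_norm)
  then show ?thesis by simp
qed

lemma cube_norm: "w \<in> cube c r \<Longrightarrow> norm (w - c) \<le> real DIM('a) * r" for w :: "'a::euclidean_space"
proof -
  assume "w \<in> cube c r"
  then have "\<forall>v\<in>Basis. \<bar>(w - c) \<bullet> v\<bar> \<le> r" by (simp add: mem_cube)
  then have "(\<Sum>v\<in>(Basis::'a set). \<bar>(w - c) \<bullet> v\<bar>) \<le> (\<Sum>v\<in>(Basis::'a set). r)"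
    by (intro sum_mono) auto
  then show ?thesis using norm_le_l1[of "w - c"] by simp
qed

lemma norm_cube: "norm (w - c) \<le> r \<Longrightarrow> w \<in> cube c r"
  unfolding mem_cube using Basis_le_norm order_trans by blast

lemma smooth_pd:
  assumes "smooth_on U f" "x \<in> U" "v \<in> Basis"
  shows "((\<lambda>t. f (x + t *\<^sub>R v)) has_vector_derivative pd v f x) (at 0)"
proof -
  have "(\<lambda>t::real. dpart [] f (x + t *\<^sub>R v)) differentiable (at 0)"
    using assms unfolding smooth_on_def by (metis empty_subsetI empty_set)
  then show ?thesis unfolding pd_def by (simp add: vector_derivative_works)
qed

lemma smooth_cont: "smooth_on U f \<Longrightarrow> continuous_on U f"
  unfolding smooth_on_def by (metis dpart.simps(1) empty_subsetI empty_set)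

lemma smooth_pd_cont: "smooth_on U f \<Longrightarrow> v \<in> Basis \<Longrightarrow> continuous_on U (pd v f)"
proof -
  assume a: "smooth_on U f" "v \<in> Basis"
  then have "set [v] \<subseteq> Basis" by simp
  then have "continuous_on U (dpart [v] f)" using a(1) unfolding smooth_on_def by blast
  then show ?thesis by simp
qed

lemma smooth_open: "smooth_on U f \<Longrightarrow> open U"
  unfolding smooth_on_def by blast


lemma finite_eps:
  fixes x :: "'a::real_normed_vector"
  assumes "finite A" "\<And>a. a \<in> A \<Longrightarrow> \<exists>d>0. \<forall>w. norm (w - x) < d \<longrightarrow> P a w"
  shows "\<exists>d>0. \<forall>w. norm (w - x) < d \<longrightarrow> (\<forall>a\<in>A. P a w)"
  using assms
proof (induction A rule: finite_induct)
  case empty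
  then show ?case by (auto intro: exI[of _ 1])
next
  case (insert a A)
  obtain d1 where d1: "d1 > 0" "\<forall>w. norm (w - x) < d1 \<longrightarrow> P a w" using insert.prems by blast
  obtain d2 where d2: "d2 > 0" "\<forall>w. norm (w - x) < d2 \<longrightarrow> (\<forall>a\<in>A. P a w)" using insert by blast
  show ?case
    by (rule exI[of _ "min d1 d2"]) (use d1 d2 in auto)
qed

lemma cont_eps:
  assumes "continuous_on U f" "open U" "x \<in> U" "e > 0"
  shows "\<exists>d>0. \<forall>w. norm (w - x) < d \<longrightarrow> w \<in> U \<and> norm (f w - f x) < e"
proof -
  obtain d1 where d1: "d1 > 0" "\<forall>x'\<in>U. dist x' x < d1 \<longrightarrow> dist (f x') (f x) < e"
    using assms(1,3,4) unfolding continuous_on_iff by blast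
  obtain d2 where d2: "d2 > 0" "ball x d2 \<subseteq> U" using assms(2,3) openE by blast
  show ?thesis
  proof (rule exI[of _ "min d1 d2"], intro conjI allI impI)
    show "min d1 d2 > 0" using d1 d2 by simp
    fix w assume w: "norm (w - x) < min d1 d2"
    then show "w \<in> U" using d2 by (auto simp: dist_norm norm_minus_commute)
    then show "norm (f w - f x) < e" using d1 w by (auto simp: dist_norm)
  qed
qed

lemma cube_est:
  fixes h :: "'a::euclidean_space \<Rightarrow> 'b::euclidean_space"
  assumes "smooth_on U h" "cube c r \<subseteq> U"
    and bd: "\<And>w v. w \<in> cube c r \<Longrightarrow> v \<in> Basis \<Longrightarrow> norm (pd v h w - \<Lambda> v) \<le> \<epsilon>"
    and "x \<in> cube c r" "y \<in> cube c r" "\<epsilon> \<ge> 0"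
  shows "norm (h x - h y - (\<Sum>v\<in>Basis. ((x - y) \<bullet> v) *\<^sub>R \<Lambda> v)) \<le> \<epsilon> * DIM('a) * norm (x - y)"
proof -
  have "norm (h x - h y - (\<Sum>v\<in>Basis. ((x - y) \<bullet> v) *\<^sub>R \<Lambda> v)) \<le> \<epsilon> * (\<Sum>v\<in>Basis. \<bar>(x - y) \<bullet> v\<bar>)"
    using assms unfolding cube_def
    by (intro coord_mvt[where P="\<lambda>v w. pd v h w"]) (auto intro: smooth_pd)
  also have "\<dots> \<le> \<epsilon> * (DIM('a) * norm (x - y))"
    by (rule mult_left_mono[OF l1_le \<open>\<epsilon> \<ge> 0\<close>])
  finally show ?thesis by (simp add: mult.assoc)
qed

lemma smooth_has_derivative:
  fixes h :: "'a::euclidean_space \<Rightarrow> 'b::euclidean_space"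
  assumes sm: "smooth_on U h" and x: "x \<in> U"
  shows "(h has_derivative (\<lambda>y. \<Sum>v\<in>Basis. (y \<bullet> v) *\<^sub>R pd v h x)) (at x)"
  unfolding has_derivative_at_alt
proof (intro conjI allI impI)
  show "bounded_linear (\<lambda>y. \<Sum>v\<in>Basis. (y \<bullet> v) *\<^sub>R pd v h x)"
    by (intro bounded_linear_sum bounded_linear_compose[OF bounded_linear_scaleR_left] bounded_linear_inner_left)
  fix e :: real assume e: "e > 0"
  define \<epsilon> where "\<epsilon> = e / DIM('a)"
  have \<epsilon>: "\<epsilon> > 0" using e by (simp add: \<epsilon>_def)
  have op: "open U" using sm by (rule smooth_open)
  obtain d where d: "d > 0" "\<forall>w. norm (w - x) < d \<longrightarrow> (\<forall>v\<in>Basis. w \<in> U \<and> norm (pd v h w - pd v h x) < \<epsilon>)"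
    using finite_eps[OF finite_Basis, of x "\<lambda>v w. w \<in> U \<and> norm (pd v h w - pd v h x) < \<epsilon>"]
      cont_eps[OF smooth_pd_cont[OF sm] op x \<epsilon>] by blast
  show "\<exists>d>0. \<forall>y. norm (y - x) < d \<longrightarrow> norm (h y - h x - (\<Sum>v\<in>Basis. ((y - x) \<bullet> v) *\<^sub>R pd v h x)) \<le> e * norm (y - x)"
  proof (rule exI[of _ "d / DIM('a)"], intro conjI allI impI)
    show "d / DIM('a) > 0" using d by simp
    fix y assume y: "norm (y - x) < d / DIM('a)"
    define r where "r = norm (y - x)"
    have sub: "cube x r \<subseteq> U"
    proof
      fix w assume "w \<in> cube x r"
      then have "norm (w - x) \<le> DIM('a) * r" by (rule cube_norm)
      also have "\<dots> < d" using y by (simp add: r_def field_simps)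
      finally have "\<forall>v\<in>(Basis::'a set). w \<in> U" using d by blast
      then show "w \<in> U" using SOME_Basis by blast
    qed
    have bd: "norm (pd v h w - pd v h x) \<le> \<epsilon>" if "w \<in> cube x r" "v \<in> Basis" for w v
    proof -
      have "norm (w - x) \<le> DIM('a) * r" using that(1) by (rule cube_norm)
      also have "\<dots> < d" using y by (simp add: r_def field_simps)
      finally show ?thesis using d that(2) by fastforce
    qed
    have "norm (h y - h x - (\<Sum>v\<in>Basis. ((y - x) \<bullet> v) *\<^sub>R pd v h x)) \<le> \<epsilon> * DIM('a) * norm (y - x)"
      by (rule cube_est[OF sm sub bd]) (auto intro: norm_cube simp: r_def less_imp_le[OF \<epsilon>])
    then show "norm (h y - h x - (\<Sum>v\<in>Basis. ((y - x) \<bullet> v) *\<^sub>R pd v h x)) \<le> e * norm (y - x)"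
      by (simp add: \<epsilon>_def)
  qed
qed

lemma smooth_frechet:
  fixes h :: "'a::euclidean_space \<Rightarrow> 'b::euclidean_space"
  assumes "smooth_on U h" "x \<in> U" "v \<in> Basis"
  shows "frechet_derivative h (at x) v = pd v h x"
proof -
  have "frechet_derivative h (at x) = (\<lambda>y. \<Sum>v\<in>Basis. (y \<bullet> v) *\<^sub>R pd v h x)"
    using smooth_has_derivative[OF assms(1,2)] by (rule frechet_derivative_at[symmetric])
  then have "frechet_derivative h (at x) v = (\<Sum>u\<in>Basis. (v \<bullet> u) *\<^sub>R pd u h x)" by simp
  also have "\<dots> = (\<Sum>u\<in>Basis. if u = v then pd u h x else 0)"
    by (rule sum.cong[OF refl]) (use assms(3) in \<open>auto simp: inner_Basis\<close>)
  also have "\<dots> = pd v h x" using assms(3) by (simp add: sum.delta')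
  finally show ?thesis .
qed


lemma key_est:
  fixes L :: "'a::real_normed_vector \<Rightarrow> 'b::real_normed_vector"
  assumes lin: "linear L" and c: "c > 0" and lb: "\<And>h. c * norm h \<le> norm (L h)"
    and e1: "norm (\<phi> w - \<phi> w' - L (w - w')) \<le> \<eta> * norm (w - w')"
    and e2: "norm (H u - H u' - \<mu> *\<^sub>R L (u - u')) \<le> \<eta> * norm (u - u')"
    and eq: "\<phi> w = H u" "\<phi> w' = H u'" and \<eta>: "\<eta> \<le> c / 2" "\<eta> \<ge> 0" and \<mu>: "\<bar>\<mu>\<bar> \<le> 1"
  shows "norm (w - w' - \<mu> *\<^sub>R (u - u')) \<le> (4 * \<eta> / c) * norm (u - u')"
proof -
  define \<Delta> where "\<Delta> = w - w' - \<mu> *\<^sub>R (u - u')"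
  have "L \<Delta> = L (w - w') - \<mu> *\<^sub>R L (u - u')"
    unfolding \<Delta>_def using lin by (simp add: linear_diff linear_scale)
  also have "\<dots> = (H u - H u' - \<mu> *\<^sub>R L (u - u')) - (\<phi> w - \<phi> w' - L (w - w'))"
    using eq by (simp add: algebra_simps)
  finally have LD: "L \<Delta> = (H u - H u' - \<mu> *\<^sub>R L (u - u')) - (\<phi> w - \<phi> w' - L (w - w'))" .
  have "c * norm \<Delta> \<le> norm (L \<Delta>)" by (rule lb)
  also have "\<dots> \<le> \<eta> * norm (u - u') + \<eta> * norm (w - w')"
    unfolding LD using e1 e2 norm_triangle_ineq4 by (smt (verit))
  also have "norm (w - w') \<le> norm \<Delta> + norm (u - u')"
  proof -
    have "w - w' = \<Delta> + \<mu> *\<^sub>R (u - u')" by (simp add: \<Delta>_def)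
    then have "norm (w - w') \<le> norm \<Delta> + \<bar>\<mu>\<bar> * norm (u - u')"
      by (metis norm_scaleR norm_triangle_ineq)
    also have "\<bar>\<mu>\<bar> * norm (u - u') \<le> norm (u - u')"
      using \<mu> by (simp add: mult_left_le_one_le)
    finally show ?thesis by simp
  qed
  then have "\<eta> * norm (w - w') \<le> \<eta> * (norm \<Delta> + norm (u - u'))"
    by (rule mult_left_mono) (use \<eta> in simp)
  finally have "c * norm \<Delta> \<le> \<eta> * norm (u - u') + \<eta> * (norm \<Delta> + norm (u - u'))"
    by simp
  then have "(c - \<eta>) * norm \<Delta> \<le> 2 * \<eta> * norm (u - u')" by (simp add: algebra_simps)
  moreover have "c / 2 * norm \<Delta> \<le> (c - \<eta>) * norm \<Delta>"
    by (rule mult_right_mono) (use \<eta> in auto)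
  ultimately have "c / 2 * norm \<Delta> \<le> 2 * \<eta> * norm (u - u')" by linarith
  then have "norm \<Delta> \<le> (2 * \<eta> * norm (u - u')) / (c / 2)"
    using c by (simp add: field_simps)
  then show ?thesis unfolding \<Delta>_def using c by (simp add: field_simps)
qed


lemma iter_fix:
  fixes G F :: "'a::real_normed_vector \<Rightarrow> 'a" and k :: nat
  assumes Gest: "\<And>u u'. u \<in> S \<Longrightarrow> u' \<in> S \<Longrightarrow> norm (G u - G u' - (u - u')) \<le> \<theta> * norm (u - u')"
    and Fest: "\<And>u u'. u \<in> S \<Longrightarrow> u' \<in> S \<Longrightarrow> norm (F u - F u' - (1 / real k) *\<^sub>R (u - u')) \<le> \<theta> * norm (u - u')"
    and x: "x \<in> S" and Fx: "F x = x"
    and ball: "cball x (2 * real k * norm (G x - x)) \<subseteq> S"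
    and rel: "(\<forall>j\<le>k. (G ^^ j) x \<in> S) \<Longrightarrow> F (G x) = (G ^^ k) x"
    and k: "k \<ge> 2" and \<theta>: "\<theta> \<ge> 0" "\<theta> \<le> 1 / (4 * real k ^ 2)"
  shows "G x = x \<and> (\<forall>j\<le>k. (G ^^ j) x \<in> S)"
proof -
  define D where "D = norm (G x - x)"
  define \<Delta> where "\<Delta> j = (G ^^ Suc j) x - (G ^^ j) x" for j
  have D0: "D \<ge> 0" by (simp add: D_def)
  have kpos: "real k \<ge> 2" using k by simp
  have th2: "2 * real k * \<theta> \<le> 1 / 2"
  proof -
    have "2 * real k * \<theta> \<le> 2 * real k * (1 / (4 * real k ^ 2))"
      using \<theta> kpos by (intro mult_left_mono) auto
    also have "\<dots> = 1 / (2 * real k)" using kpos by (simp add: power2_eq_square field_simps)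
    also have "\<dots> \<le> 1 / 2" using kpos by (simp add: field_simps)
    finally show ?thesis .
  qed
  have \<Delta>0: "\<Delta> 0 = G x - x" by (simp add: \<Delta>_def)
  have P: "(G ^^ j) x \<in> cball x (2 * real j * D) \<and> norm (\<Delta> j - \<Delta> 0) \<le> 2 * real j * \<theta> * D"
    if "j \<le> k" for j
    using that
  proof (induction j)
    case 0
    then show ?case using D0 by simp
  next
    case (Suc j)
    then have IH: "(G ^^ j) x \<in> cball x (2 * real j * D)" "norm (\<Delta> j - \<Delta> 0) \<le> 2 * real j * \<theta> * D"
      by auto
    have jk: "real j \<le> real k" using Suc.prems by simp
    have a1: "norm (\<Delta> j) \<le> norm (\<Delta> 0) + 2 * real j * \<theta> * D"
      using IH(2) norm_triangle_ineq2[of "\<Delta> j" "\<Delta> 0"] by linarith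
    have a2: "2 * real j * \<theta> * D \<le> 2 * real k * \<theta> * D"
      using jk \<theta> D0 by (intro mult_right_mono) auto
    have a3: "2 * real k * \<theta> * D \<le> 1 / 2 * D" using th2 D0 by (intro mult_right_mono) auto
    have "norm (\<Delta> 0) = D" using \<Delta>0 by (simp add: D_def)
    then have nD: "norm (\<Delta> j) \<le> 2 * D" using a1 a2 a3 D0 by linarith
    have S1: "cball x (2 * real j * D) \<subseteq> S"
    proof -
      have "2 * real j * D \<le> 2 * real k * D" using jk D0 by (simp add: mult_right_mono)
      then show ?thesis using ball unfolding D_def by (meson subset_cball subset_trans)
    qed
    have mem1: "(G ^^ Suc j) x \<in> cball x (2 * real (Suc j) * D)"
    proof -
      have "dist x ((G ^^ Suc j) x) \<le> dist x ((G ^^ j) x) + norm (\<Delta> j)"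
        unfolding \<Delta>_def by (metis dist_norm dist_triangle norm_minus_commute)
      also have "\<dots> \<le> 2 * real j * D + 2 * D" using IH(1) nD by (simp add: add_mono)
      finally show ?thesis by (simp add: algebra_simps)
    qed
    have S2: "cball x (2 * real (Suc j) * D) \<subseteq> S"
    proof -
      have "2 * real (Suc j) * D \<le> 2 * real k * D" using Suc.prems D0 by (simp add: mult_right_mono)
      then show ?thesis using ball unfolding D_def by (meson subset_cball subset_trans)
    qed
    have inS: "(G ^^ j) x \<in> S" "(G ^^ Suc j) x \<in> S" using IH(1) S1 mem1 S2 by auto
    have "\<Delta> (Suc j) - \<Delta> j = G ((G ^^ Suc j) x) - G ((G ^^ j) x) - ((G ^^ Suc j) x - (G ^^ j) x)"
      by (simp add: \<Delta>_def)
    then have "norm (\<Delta> (Suc j) - \<Delta> j) \<le> \<theta> * norm (\<Delta> j)"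
      using Gest[OF inS(2) inS(1)] by (simp add: \<Delta>_def)
    also have "\<dots> \<le> \<theta> * (2 * D)" using nD \<theta> by (simp add: mult_left_mono)
    finally have th2D: "norm (\<Delta> (Suc j) - \<Delta> j) \<le> \<theta> * (2 * D)" .
    have "norm (\<Delta> (Suc j) - \<Delta> 0) \<le> 2 * real j * \<theta> * D + \<theta> * (2 * D)"
    proof -
      have "\<Delta> (Suc j) - \<Delta> 0 = (\<Delta> (Suc j) - \<Delta> j) + (\<Delta> j - \<Delta> 0)" by simp
      then have "norm (\<Delta> (Suc j) - \<Delta> 0) \<le> norm (\<Delta> (Suc j) - \<Delta> j) + norm (\<Delta> j - \<Delta> 0)"
        by (metis norm_triangle_ineq)
      then show ?thesis using IH(2) th2D by linarith
    qed
    then show ?case using mem1 by (simp add: algebra_simps)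
  qed
  have allS: "\<forall>j\<le>k. (G ^^ j) x \<in> S"
  proof (intro allI impI)
    fix j assume j: "j \<le> k"
    have "2 * real j * D \<le> 2 * real k * D" using j D0 by (simp add: mult_right_mono)
    then show "(G ^^ j) x \<in> S" using P[OF j] ball unfolding D_def
      by (meson subset_cball subset_trans subsetD)
  qed
  have tel: "(G ^^ k) x - x = (\<Sum>j<k. \<Delta> j)"
    unfolding \<Delta>_def using sum_lessThan_telescope[of "\<lambda>j. (G ^^ j) x" k] by simp
  have "norm ((G ^^ k) x - x - real k *\<^sub>R \<Delta> 0) = norm (\<Sum>j<k. (\<Delta> j - \<Delta> 0))"
    by (simp add: tel sum_subtractf sum_constant_scaleR)
  also have "\<dots> \<le> (\<Sum>j<k. norm (\<Delta> j - \<Delta> 0))" by (rule norm_sum)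
  also have "\<dots> \<le> (\<Sum>j<k. 2 * real k * \<theta> * D)"
  proof (rule sum_mono)
    fix j assume "j \<in> {..<k}"
    then have j: "j \<le> k" by simp
    have "2 * real j * \<theta> * D \<le> 2 * real k * \<theta> * D"
      using j \<theta> D0 by (intro mult_right_mono) auto
    then show "norm (\<Delta> j - \<Delta> 0) \<le> 2 * real k * \<theta> * D" using P[OF j] by linarith
  qed
  also have "\<dots> = 2 * real k ^ 2 * \<theta> * D" by (simp add: power2_eq_square)
  also have "\<dots> \<le> 1 / 2 * D"
  proof -
    have "2 * real k ^ 2 * \<theta> \<le> 2 * real k ^ 2 * (1 / (4 * real k ^ 2))"
      using \<theta> by (intro mult_left_mono) auto
    also have "\<dots> = 1 / 2" using kpos by (simp add: field_simps)
    finally show ?thesis using D0 by (intro mult_right_mono) auto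
  qed
  finally have A: "norm ((G ^^ k) x - x - real k *\<^sub>R \<Delta> 0) \<le> 1 / 2 * D" .
  have GxS: "G x \<in> S" using allS[rule_format, of 1] k by simp
  have "norm (F (G x) - F x - (1 / real k) *\<^sub>R (G x - x)) \<le> \<theta> * norm (G x - x)"
    by (rule Fest[OF GxS x])
  also have "\<dots> \<le> 1 / 4 * D"
  proof -
    have "1 / (4 * real k ^ 2) \<le> 1 / 4" using kpos by (simp add: field_simps)
    then have "\<theta> \<le> 1 / 4" using \<theta> by linarith
    then show ?thesis using D0 unfolding D_def by (intro mult_right_mono) auto
  qed
  finally have B: "norm ((G ^^ k) x - x - (1 / real k) *\<^sub>R \<Delta> 0) \<le> 1 / 4 * D"
    using rel[OF allS] Fx \<Delta>0 by simp
  have "norm ((real k - 1 / real k) *\<^sub>R \<Delta> 0) \<le> 3 / 4 * D"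
  proof -
    have "(real k - 1 / real k) *\<^sub>R \<Delta> 0 = ((G ^^ k) x - x - (1 / real k) *\<^sub>R \<Delta> 0) - ((G ^^ k) x - x - real k *\<^sub>R \<Delta> 0)"
      by (simp add: algebra_simps)
    then have "norm ((real k - 1 / real k) *\<^sub>R \<Delta> 0) \<le> norm ((G ^^ k) x - x - (1 / real k) *\<^sub>R \<Delta> 0) + norm ((G ^^ k) x - x - real k *\<^sub>R \<Delta> 0)"
      by (metis norm_triangle_ineq4)
    then show ?thesis using A B by linarith
  qed
  moreover have "norm ((real k - 1 / real k) *\<^sub>R \<Delta> 0) = (real k - 1 / real k) * D"
  proof -
    have "1 * 1 \<le> real k * real k" using kpos by (intro mult_mono) auto
    then have "real k - 1 / real k \<ge> 0" using kpos by (simp add: field_simps)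
    then show ?thesis by (simp add: \<Delta>0 D_def)
  qed
  moreover have "real k - 1 / real k \<ge> 3 / 2"
  proof -
    have "0 \<le> (2 * real k + 1) * (real k - 2)" using kpos by (intro mult_nonneg_nonneg) auto
    then show ?thesis using kpos by (simp add: field_simps algebra_simps)
  qed
  ultimately have "3 / 2 * D \<le> 3 / 4 * D"
    by (smt (verit) D0 mult_right_mono)
  then have "D = 0" using D0 by linarith
  then show ?thesis using allS by (simp add: D_def)
qed


lemma Diff_open_nbhd:
  fixes \<phi> :: "'d::euclidean_space \<Rightarrow> 'e::euclidean_space"
  assumes "f \<in> Diff TYPE('d) M" "chart M \<phi> V" "compact K" "K \<subseteq> V" "set vs \<subseteq> Basis" "\<epsilon> > 0"
  shows "openin (Diff_top TYPE('d) M) (Diff TYPE('d) M \<inter> Cinf_nbhd M f \<phi> K vs \<epsilon>)"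
proof -
  let ?S = "{Cinf_nbhd M f \<phi> K vs \<epsilon> | f (\<phi>::'d \<Rightarrow> 'e) V K vs \<epsilon>.
           f \<in> Diff TYPE('d) M \<and> chart M \<phi> V \<and> compact K \<and> K \<subseteq> V \<and> set vs \<subseteq> Basis \<and> \<epsilon> > 0}"
  have "Cinf_nbhd M f \<phi> K vs \<epsilon> \<in> ?S" using assms by blast
  then have "openin (topology_generated_by ?S) (Cinf_nbhd M f \<phi> K vs \<epsilon>)"
    by (rule topology_generated_by_Basis)
  then show ?thesis unfolding Diff_top_def by (rule openin_subtopology_Int2)
qed

lemma Diff_topspace: "g \<in> topspace (Diff_top D M) \<Longrightarrow> g \<in> Diff D M"
  unfolding Diff_top_def by simp

lemma Hom_topspace:
  assumes "\<rho> \<in> topspace (Hom_top D M n k)"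
  shows "\<And>i. i \<in> {0..n} \<Longrightarrow> \<rho> i \<in> Diff D M"
    and "\<And>i. i \<in> {1..n} \<Longrightarrow> \<rho> 0 \<circ> \<rho> i = (\<rho> i ^^ k) \<circ> \<rho> 0"
    and "\<And>i. i \<in> {0..n} \<Longrightarrow> \<rho> i \<in> topspace (Diff_top D M)"
  using assms unfolding Hom_top_def by (auto intro: Diff_topspace simp: PiE_iff)

lemma Hom_open:
  assumes W: "\<And>i. i \<in> {0..n} \<Longrightarrow> openin (Diff_top D M) (W i)"
  shows "openin (Hom_top D M n k) {\<rho> \<in> topspace (Hom_top D M n k). \<forall>i\<in>{0..n}. \<rho> i \<in> W i}"
proof -
  define R where "R = {\<rho>::nat \<Rightarrow> 'a \<Rightarrow> 'a. (\<forall>i\<in>{1..n}. \<rho> 0 \<circ> \<rho> i = (\<rho> i ^^ k) \<circ> \<rho> 0) \<and>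
         (\<forall>i\<in>{1..n}. \<forall>j\<in>{1..n}. \<rho> i \<circ> \<rho> j = \<rho> j \<circ> \<rho> i)}"
  have HT: "Hom_top D M n k = subtopology (product_topology (\<lambda>_. Diff_top D M) {0..n}) R"
    unfolding Hom_top_def R_def by simp
  have "openin (product_topology (\<lambda>_. Diff_top D M) {0..n}) (PiE {0..n} W)"
    unfolding openin_PiE_gen using W by auto
  then have op: "openin (Hom_top D M n k) (R \<inter> PiE {0..n} W)"
    unfolding HT by (rule openin_subtopology_Int2)
  have sub: "W i \<subseteq> topspace (Diff_top D M)" if "i \<in> {0..n}" for i
    using W[OF that] by (rule openin_subset)
  have "{\<rho> \<in> topspace (Hom_top D M n k). \<forall>i\<in>{0..n}. \<rho> i \<in> W i} = R \<inter> PiE {0..n} W"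
    unfolding HT using sub by (auto simp: PiE_iff extensional_def; force)
  then show ?thesis using op by simp
qed

lemma cont_crit:
  fixes f :: "'x \<Rightarrow> 'a::metric_space"
  assumes inM: "\<And>x. x \<in> topspace X \<Longrightarrow> f x \<in> M"
    and eps: "\<And>x e. x \<in> topspace X \<Longrightarrow> e > 0 \<Longrightarrow> \<exists>T. openin X T \<and> x \<in> T \<and> (\<forall>y\<in>T. dist (f y) (f x) < e)"
  shows "continuous_map X (top_of_set M) f"
  unfolding continuous_map
proof (intro conjI allI impI)
  show "f ` topspace X \<subseteq> topspace (top_of_set M)" using inM by auto
  fix W assume W: "openin (top_of_set M) W"
  obtain Q where O: "open Q" "W = M \<inter> Q" using openin_open[THEN iffD1, OF W] by blast
  show "openin X {x \<in> topspace X. f x \<in> W}"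
  proof (rule openin_subopen[THEN iffD2], rule ballI)
    fix x assume x: "x \<in> {x \<in> topspace X. f x \<in> W}"
    then have fQ: "f x \<in> Q" and xt: "x \<in> topspace X" using O(2) by auto
    obtain e where e: "e > 0" "ball (f x) e \<subseteq> Q" using openE[OF O(1) fQ] .
    obtain T where T: "openin X T" "x \<in> T" "\<forall>y\<in>T. dist (f y) (f x) < e"
      using eps[OF xt e(1)] by blast
    have "T \<subseteq> {x \<in> topspace X. f x \<in> W}"
    proof
      fix y assume y: "y \<in> T"
      then have yt: "y \<in> topspace X" using openin_subset[OF T(1)] by blast
      have "f y \<in> ball (f x) e" using T(3) y by (auto simp: dist_commute)
      then have "f y \<in> Q" using e(2) by blast
      moreover have "f y \<in> M" by (rule inM[OF yt])
      ultimately show "y \<in> {x \<in> topspace X. f x \<in> W}" using yt O(2) by blast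
    qed
    then show "\<exists>T. openin X T \<and> x \<in> T \<and> T \<subseteq> {x \<in> topspace X. f x \<in> W}" using T by blast
  qed
qed


lemma cube_from_ball:
  fixes c :: "'a::euclidean_space"
  assumes "d > 0" "B > 0" "\<And>w. norm (w - c) < d \<Longrightarrow> P w"
  shows "\<exists>r>0. r \<le> B \<and> (\<forall>w\<in>cube c r. P w)"
proof (rule exI[of _ "min B (d / (2 * DIM('a)))"], intro conjI ballI)
  show "min B (d / (2 * DIM('a))) > 0" using assms by simp
  show "min B (d / (2 * DIM('a))) \<le> B" by simp
  fix w assume "w \<in> cube c (min B (d / (2 * DIM('a))))"
  then have "norm (w - c) \<le> DIM('a) * min B (d / (2 * DIM('a)))" by (rule cube_norm)
  also have "\<dots> \<le> DIM('a) * (d / (2 * DIM('a)))" by (intro mult_left_mono) auto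
  also have "\<dots> < d" using assms by (simp add: field_simps)
  finally show "P w" by (rule assms(3))
qed

lemma cube_mono: "r \<le> R \<Longrightarrow> cube c r \<subseteq> cube c R"
  unfolding mem_cube subset_iff by (meson order_trans)

lemma center_cube: "r \<ge> 0 \<Longrightarrow> c \<in> cube c r"
  by (simp add: mem_cube)

lemma compact_cube: "compact (cube c r)"
  unfolding cube_def by (rule compact_cbox)

lemma psi_cont:
  fixes \<phi> :: "'d::euclidean_space \<Rightarrow> 'e::euclidean_space"
  assumes hom: "homeomorphism V (\<phi> ` V) \<phi> \<psi>" and op: "openin (top_of_set M) (\<phi> ` V)"
    and u0: "u0 \<in> V" and e: "e > 0"
  shows "\<exists>\<sigma>>0. \<forall>y\<in>M. norm (y - \<phi> u0) < \<sigma> \<longrightarrow> y \<in> \<phi> ` V \<and> norm (\<psi> y - u0) < e"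
proof -
  have p0: "\<phi> u0 \<in> \<phi> ` V" using u0 by blast
  obtain s1 where s1: "s1 > 0" "\<forall>y\<in>M. dist y (\<phi> u0) < s1 \<longrightarrow> y \<in> \<phi> ` V"
    using op p0 unfolding openin_euclidean_subtopology_iff by blast
  have cont: "continuous_on (\<phi> ` V) \<psi>" and inv: "\<psi> (\<phi> u0) = u0"
    using hom u0 unfolding homeomorphism_def by auto
  obtain s2 where s2: "s2 > 0" "\<forall>y\<in>\<phi> ` V. dist y (\<phi> u0) < s2 \<longrightarrow> dist (\<psi> y) (\<psi> (\<phi> u0)) < e"
    using cont p0 e unfolding continuous_on_iff by blast
  show ?thesis
  proof (rule exI[of _ "min s1 s2"], intro conjI ballI impI)
    show "min s1 s2 > 0" using s1 s2 by simp
    fix y assume y: "y \<in> M" "norm (y - \<phi> u0) < min s1 s2"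
    show yV: "y \<in> \<phi> ` V" using s1 y by (simp add: dist_norm)
    show "norm (\<psi> y - u0) < e" using s2(2) yV y(2) inv unfolding dist_norm by (metis min_less_iff_conj)
  qed
qed


lemma Diff_smooth:
  fixes \<phi> :: "'d::euclidean_space \<Rightarrow> 'e::euclidean_space"
  shows "f \<in> Diff TYPE('d) M \<Longrightarrow> chart M \<phi> V \<Longrightarrow> smooth_on V (f \<circ> \<phi>)"
  unfolding Diff_def smooth_self_map_def by blast

lemma Diff_maps: "f \<in> Diff D M \<Longrightarrow> x \<in> M \<Longrightarrow> f x \<in> M"
  unfolding Diff_def smooth_self_map_def by blast

lemma chart_deriv:
  fixes \<phi> :: "'d::euclidean_space \<Rightarrow> 'e::euclidean_space"
  assumes ch: "chart M \<phi> V" and u0: "u0 \<in> V" and f: "f \<in> Diff TYPE('d) M"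
    and ds: "deriv_scalar_at TYPE('d) M f (\<phi> u0) \<mu>" and v: "v \<in> Basis"
  shows "pd v (f \<circ> \<phi>) u0 = \<mu> *\<^sub>R pd v \<phi> u0"
proof -
  have sm: "smooth_on V \<phi>" using ch unfolding chart_def by blast
  have "frechet_derivative (f \<circ> \<phi>) (at u0) = (\<lambda>h. \<mu> *\<^sub>R frechet_derivative \<phi> (at u0) h)"
    using ds ch u0 unfolding deriv_scalar_at_def by blast
  then have "frechet_derivative (f \<circ> \<phi>) (at u0) v = \<mu> *\<^sub>R frechet_derivative \<phi> (at u0) v" by simp
  then show ?thesis
    using smooth_frechet[OF Diff_smooth[OF f ch] u0 v] smooth_frechet[OF sm u0 v] by simp
qed

theorem lemma2p10:
  fixes M :: "'e::euclidean_space set" and n k :: nat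
    and \<rho>0 :: "nat \<Rightarrow> ('e \<Rightarrow> 'e)" and p0 :: 'e
  assumes "n \<ge> 2" and "k \<ge> 2"
    and "closed_manifold TYPE('d::euclidean_space) M"
    and "\<rho>0 \<in> topspace (Hom_top TYPE('d) M n k)"
    and "p0 \<in> M" and "global_fixed_point n \<rho>0 p0"
    and "deriv_scalar_at TYPE('d) M (\<rho>0 0) p0 (1 / real k)"
    and "\<forall>i\<in>{1..n}. deriv_scalar_at TYPE('d) M (\<rho>0 i) p0 1"
  shows "\<exists>U. openin (Hom_top TYPE('d) M n k) U \<and> \<rho>0 \<in> U \<and>
           (\<exists>phat. continuous_map (subtopology (Hom_top TYPE('d) M n k) U) (top_of_set M) phat \<and>
                   phat \<rho>0 = p0 \<and> (\<forall>\<rho>\<in>U. global_fixed_point n \<rho> (phat \<rho>)))"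
proof -
  have cm: "submanifold TYPE('d) M" using assms(3) unfolding closed_manifold_def by blast
  obtain \<phi> :: "'d \<Rightarrow> 'e" and V where ch: "chart M \<phi> V" and pV: "p0 \<in> \<phi> ` V"
    using cm assms(5) unfolding submanifold_def by blast
  then obtain u0 where u0: "u0 \<in> V" and pu: "\<phi> u0 = p0" by blast
  have opV: "open V" and sm\<phi>: "smooth_on V \<phi>" and \<phi>M: "\<phi> ` V \<subseteq> M"
    and opM: "openin (top_of_set M) (\<phi> ` V)" and injL: "inj (frechet_derivative \<phi> (at u0))"
    using ch u0 unfolding chart_def by auto
  obtain \<psi> where hom: "homeomorphism V (\<phi> ` V) \<phi> \<psi>" using ch unfolding chart_def by blast
  have \<psi>\<phi>: "\<And>u. u \<in> V \<Longrightarrow> \<psi> (\<phi> u) = u" and \<phi>\<psi>: "\<And>y. y \<in> \<phi> ` V \<Longrightarrow> \<phi> (\<psi> y) = y"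
    using hom unfolding homeomorphism_def by auto
  have cont\<phi>: "continuous_on V \<phi>" using hom unfolding homeomorphism_def by auto
  define L where "L = (\<lambda>h. \<Sum>v\<in>Basis. (h \<bullet> v) *\<^sub>R pd v \<phi> u0)"
  have hdL: "(\<phi> has_derivative L) (at u0)" unfolding L_def by (rule smooth_has_derivative[OF sm\<phi> u0])
  have L_eq: "frechet_derivative \<phi> (at u0) = L" using frechet_derivative_at[OF hdL] by simp
  have linL: "linear L" using hdL by (rule has_derivative_linear)
  obtain c where c: "c > 0" "\<And>h. c * norm h \<le> norm (L h)"
    using linear_inj_bounded_below_pos[OF linL] injL L_eq by metis
  have kpos: "real k \<ge> 2" using assms(2) by simp
  define \<eta> where "\<eta> = c / (16 * real k ^ 2)"
  define \<theta> where "\<theta> = 1 / (4 * real k ^ 2)"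
  have k2: "real k ^ 2 \<ge> 4"
  proof -
    have "2 * 2 \<le> real k * real k" using kpos by (intro mult_mono) auto
    then show ?thesis by (simp add: power2_eq_square)
  qed
  have \<eta>pos: "\<eta> > 0" using c assms(2) by (simp add: \<eta>_def)
  have \<eta>c: "\<eta> \<le> c / 2"
  proof -
    have "c / (16 * real k ^ 2) \<le> c / 2" using c k2 kpos by (intro divide_left_mono) auto
    then show ?thesis by (simp add: \<eta>_def)
  qed
  have \<theta>\<eta>: "4 * \<eta> / c = \<theta>" using c by (simp add: \<eta>_def \<theta>_def field_simps)
  have \<theta>0: "\<theta> \<ge> 0" by (simp add: \<theta>_def)
  have \<theta>16: "\<theta> \<le> 1 / 16"
  proof -
    have "1 / (4 * real k ^ 2) \<le> 1 / 16" using k2 kpos by (intro divide_left_mono) auto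
    then show ?thesis by (simp add: \<theta>_def)
  qed
  define dd where "dd = real DIM('d)"
  have dd: "dd \<ge> 1" by (simp add: dd_def DIM_positive Suc_le_eq)
  define \<mu> where "\<mu> i = (if i = 0 then 1 / real k else 1)" for i :: nat
  have \<mu>bd: "\<bar>\<mu> i\<bar> \<le> 1" for i using kpos by (simp add: \<mu>_def)
  have \<rho>0D: "\<And>i. i \<in> {0..n} \<Longrightarrow> \<rho>0 i \<in> Diff TYPE('d) M" by (rule Hom_topspace(1)[OF assms(4)])
  have \<rho>0fix: "\<And>i. i \<in> {0..n} \<Longrightarrow> \<rho>0 i p0 = p0" using assms(6) unfolding global_fixed_point_def by blast
  have dsc: "deriv_scalar_at TYPE('d) M (\<rho>0 i) p0 (\<mu> i)" if "i \<in> {0..n}" for i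
  proof (cases "i = 0")
    case True then show ?thesis using assms(7) by (simp add: \<mu>_def)
  next
    case False then have "i \<in> {1..n}" using that by auto
    then show ?thesis using assms(8) False by (simp add: \<mu>_def)
  qed
  have pd0: "pd v (\<rho>0 i \<circ> \<phi>) u0 = \<mu> i *\<^sub>R pd v \<phi> u0" if "i \<in> {0..n}" "v \<in> Basis" for i v
    using chart_deriv[OF ch u0 \<rho>0D[OF that(1)] _ that(2)] dsc[OF that(1)] pu by simp
  have "\<exists>d>0. \<forall>w. norm (w - u0) < d \<longrightarrow> (\<forall>v\<in>Basis. w \<in> V \<and> norm (pd v \<phi> w - pd v \<phi> u0) < \<eta> / dd)"
  proof (rule finite_eps[OF finite_Basis])
    fix v :: 'd assume v: "v \<in> Basis"
    have e: "\<eta> / dd > 0" using \<eta>pos dd by simp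
    show "\<exists>d>0. \<forall>w. norm (w - u0) < d \<longrightarrow> w \<in> V \<and> norm (pd v \<phi> w - pd v \<phi> u0) < \<eta> / dd"
      by (rule cont_eps[OF smooth_pd_cont[OF sm\<phi> v] opV u0 e])
  qed
  then obtain d0 where d0: "d0 > 0" "\<And>w. norm (w - u0) < d0 \<Longrightarrow> (\<forall>v\<in>Basis. w \<in> V \<and> norm (pd v \<phi> w - pd v \<phi> u0) < \<eta> / dd)"
    by blast
  have "\<exists>r>0. r \<le> 1 \<and> (\<forall>w\<in>cube u0 r. (\<forall>v\<in>Basis. w \<in> V \<and> norm (pd v \<phi> w - pd v \<phi> u0) < \<eta> / dd))"
    by (rule cube_from_ball[OF d0(1) zero_less_one]) (rule d0(2))
  then obtain R0 where R0: "R0 > 0" "\<forall>w\<in>cube u0 R0. (\<forall>v\<in>Basis. w \<in> V \<and> norm (pd v \<phi> w - pd v \<phi> u0) < \<eta> / dd)"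
    by blast
  have C0V: "cube u0 R0 \<subseteq> V"
  proof
    fix w assume "w \<in> cube u0 R0"
    then have "\<forall>v\<in>(Basis::'d set). w \<in> V" using R0(2) by blast
    then show "w \<in> V" using SOME_Basis by blast
  qed
  have C0est: "norm (\<phi> w - \<phi> w' - L (w - w')) \<le> \<eta> * norm (w - w')"
    if "w \<in> cube u0 R0" "w' \<in> cube u0 R0" for w w'
  proof -
    have "norm (\<phi> w - \<phi> w' - (\<Sum>v\<in>Basis. ((w - w') \<bullet> v) *\<^sub>R pd v \<phi> u0)) \<le> \<eta> / dd * DIM('d) * norm (w - w')"
      by (rule cube_est[OF sm\<phi> C0V]) (use R0(2) that \<eta>pos dd in \<open>auto intro: less_imp_le\<close>)
    then show ?thesis using dd by (simp add: L_def dd_def)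
  qed
  obtain \<sigma> where \<sigma>: "\<sigma> > 0" "\<And>y. y \<in> M \<Longrightarrow> norm (y - p0) < \<sigma> \<Longrightarrow> y \<in> \<phi> ` V \<and> norm (\<psi> y - u0) < R0"
    using psi_cont[OF hom opM u0 R0(1)] pu by auto
  have "\<exists>d>0. \<forall>w. norm (w - u0) < d \<longrightarrow> (\<forall>iv\<in>{0..n} \<times> Basis.
          norm (\<rho>0 (fst iv) (\<phi> w) - p0) < \<sigma> / 2 \<and>
          norm (pd (snd iv) (\<rho>0 (fst iv) \<circ> \<phi>) w - pd (snd iv) (\<rho>0 (fst iv) \<circ> \<phi>) u0) < \<eta> / (2 * dd))"
  proof (rule finite_eps)
    show "finite ({0..n} \<times> (Basis::'d set))" by simp
    fix iv assume iv: "iv \<in> {0..n} \<times> (Basis::'d set)"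
    define i where "i = fst iv"
    define v where "v = snd iv"
    have i: "i \<in> {0..n}" and v: "v \<in> Basis" using iv by (auto simp: i_def v_def)
    have smi: "smooth_on V (\<rho>0 i \<circ> \<phi>)" by (rule Diff_smooth[OF \<rho>0D[OF i] ch])
    have e1: "\<sigma> / 2 > 0" using \<sigma> by simp
    have e2: "\<eta> / (2 * dd) > 0" using \<eta>pos dd by simp
    obtain d1 where d1: "d1 > 0" "\<forall>w. norm (w - u0) < d1 \<longrightarrow> w \<in> V \<and> norm ((\<rho>0 i \<circ> \<phi>) w - (\<rho>0 i \<circ> \<phi>) u0) < \<sigma> / 2"
      using cont_eps[OF smooth_cont[OF smi] opV u0 e1] by blast
    obtain d2 where d2: "d2 > 0" "\<forall>w. norm (w - u0) < d2 \<longrightarrow> w \<in> V \<and> norm (pd v (\<rho>0 i \<circ> \<phi>) w - pd v (\<rho>0 i \<circ> \<phi>) u0) < \<eta> / (2 * dd)"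
      using cont_eps[OF smooth_pd_cont[OF smi v] opV u0 e2] by blast
    have "(\<rho>0 i \<circ> \<phi>) u0 = p0" using \<rho>0fix[OF i] pu by simp
    then show "\<exists>d>0. \<forall>w. norm (w - u0) < d \<longrightarrow> norm (\<rho>0 (fst iv) (\<phi> w) - p0) < \<sigma> / 2 \<and>
          norm (pd (snd iv) (\<rho>0 (fst iv) \<circ> \<phi>) w - pd (snd iv) (\<rho>0 (fst iv) \<circ> \<phi>) u0) < \<eta> / (2 * dd)"
      unfolding i_def[symmetric] v_def[symmetric]
      using d1 d2 by (intro exI[of _ "min d1 d2"]) auto
  qed
  then obtain d1 where d1: "d1 > 0" "\<And>w. norm (w - u0) < d1 \<Longrightarrow> (\<forall>iv\<in>{0..n} \<times> Basis.
          norm (\<rho>0 (fst iv) (\<phi> w) - p0) < \<sigma> / 2 \<and>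
          norm (pd (snd iv) (\<rho>0 (fst iv) \<circ> \<phi>) w - pd (snd iv) (\<rho>0 (fst iv) \<circ> \<phi>) u0) < \<eta> / (2 * dd))"
    by blast
  have "\<exists>r>0. r \<le> R0 \<and> (\<forall>w\<in>cube u0 r. (\<forall>iv\<in>{0..n} \<times> Basis.
          norm (\<rho>0 (fst iv) (\<phi> w) - p0) < \<sigma> / 2 \<and>
          norm (pd (snd iv) (\<rho>0 (fst iv) \<circ> \<phi>) w - pd (snd iv) (\<rho>0 (fst iv) \<circ> \<phi>) u0) < \<eta> / (2 * dd)))"
    by (rule cube_from_ball[OF d1(1) R0(1)]) (rule d1(2))
  then obtain R1 where R1: "R1 > 0" "R1 \<le> R0" and R1b: "\<forall>w\<in>cube u0 R1. (\<forall>iv\<in>{0..n} \<times> Basis.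
          norm (\<rho>0 (fst iv) (\<phi> w) - p0) < \<sigma> / 2 \<and>
          norm (pd (snd iv) (\<rho>0 (fst iv) \<circ> \<phi>) w - pd (snd iv) (\<rho>0 (fst iv) \<circ> \<phi>) u0) < \<eta> / (2 * dd))"
    by blast
  have R1c: "norm (\<rho>0 i (\<phi> w) - p0) < \<sigma> / 2" if "w \<in> cube u0 R1" "i \<in> {0..n}" for w i
  proof -
    have "(i, SOME v. v \<in> (Basis::'d set)) \<in> {0..n} \<times> Basis" using that(2) SOME_Basis by blast
    then show ?thesis using R1b that(1) by fastforce
  qed
  have R1d: "norm (pd v (\<rho>0 i \<circ> \<phi>) w - pd v (\<rho>0 i \<circ> \<phi>) u0) < \<eta> / (2 * dd)"
    if "w \<in> cube u0 R1" "i \<in> {0..n}" "v \<in> Basis" for w i v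
  proof -
    have "(i, v) \<in> {0..n} \<times> Basis" using that(2,3) by blast
    then show ?thesis using R1b that(1) by fastforce
  qed
  define C1 where "C1 = cube u0 R1"
  have C10: "C1 \<subseteq> cube u0 R0" unfolding C1_def by (rule cube_mono[OF R1(2)])
  have C1V: "C1 \<subseteq> V" using C10 C0V by blast
  have u0C1: "u0 \<in> C1" unfolding C1_def using R1 by (simp add: center_cube)
  define r where "r = R1 / (16 * real k)"
  have rpos: "r > 0" using R1 kpos by (simp add: r_def)
  define s0 where "s0 = r / 4"
  have s0pos: "s0 > 0" using rpos by (simp add: s0_def)
  obtain \<sigma>' where \<sigma>': "\<sigma>' > 0" "\<And>y. y \<in> M \<Longrightarrow> norm (y - p0) < \<sigma>' \<Longrightarrow> y \<in> \<phi> ` V \<and> norm (\<psi> y - u0) < s0"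
    using psi_cont[OF hom opM u0 s0pos] pu by auto
  define \<delta> where "\<delta> = min (\<sigma> / 2) (min \<sigma>' (\<eta> / (2 * dd)))"
  have \<delta>pos: "\<delta> > 0" using \<sigma> \<sigma>' \<eta>pos dd by (simp add: \<delta>_def)
  define W where "W i = Diff TYPE('d) M \<inter> Cinf_nbhd M (\<rho>0 i) \<phi> C1 [] \<delta> \<inter>
        (\<Inter>v\<in>Basis. Diff TYPE('d) M \<inter> Cinf_nbhd M (\<rho>0 i) \<phi> C1 [v] \<delta>)" for i
  define U where "U = {\<rho> \<in> topspace (Hom_top TYPE('d) M n k). \<forall>i\<in>{0..n}. \<rho> i \<in> W i}"
  have cC1: "compact C1" unfolding C1_def by (rule compact_cube)
  have Wopen: "openin (Diff_top TYPE('d) M) (W i)" if "i \<in> {0..n}" for i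
  proof -
    have o1: "openin (Diff_top TYPE('d) M) (Diff TYPE('d) M \<inter> Cinf_nbhd M (\<rho>0 i) \<phi> C1 [] \<delta>)"
      by (rule Diff_open_nbhd[OF \<rho>0D[OF that] ch cC1 C1V _ \<delta>pos]) simp
    have o2: "openin (Diff_top TYPE('d) M) (\<Inter>v\<in>Basis. Diff TYPE('d) M \<inter> Cinf_nbhd M (\<rho>0 i) \<phi> C1 [v] \<delta>)"
      by (rule openin_INT2[OF finite_Basis]) (auto intro!: Diff_open_nbhd[OF \<rho>0D[OF that] ch cC1 C1V _ \<delta>pos])
    show ?thesis unfolding W_def using o1 o2 by (rule openin_Int)
  qed
  have Uopen: "openin (Hom_top TYPE('d) M n k) U"
    unfolding U_def by (rule Hom_open) (rule Wopen)
  have self_nbhd: "f \<in> Cinf_nbhd M f \<phi> K vs e" if "e > 0" for f K vs e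
    using that by (simp add: Cinf_nbhd_def)
  have \<rho>0U: "\<rho>0 \<in> U"
    unfolding U_def W_def using assms(4) \<rho>0D self_nbhd[OF \<delta>pos] by auto
  have Utop: "U \<subseteq> topspace (Hom_top TYPE('d) M n k)" unfolding U_def by blast
  have UD: "\<rho> i \<in> Diff TYPE('d) M" if "\<rho> \<in> U" "i \<in> {0..n}" for \<rho> i
    using Hom_topspace(1)[OF subsetD[OF Utop that(1)] that(2)] .
  have Uclose: "norm (\<rho> i (\<phi> u) - \<rho>0 i (\<phi> u)) < \<delta>" if "\<rho> \<in> U" "i \<in> {0..n}" "u \<in> C1" for \<rho> i u
    using that unfolding U_def W_def Cinf_nbhd_def by auto
  have Uclose1: "norm (pd v (\<rho> i \<circ> \<phi>) u - pd v (\<rho>0 i \<circ> \<phi>) u) < \<delta>"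
    if "\<rho> \<in> U" "i \<in> {0..n}" "u \<in> C1" "v \<in> Basis" for \<rho> i u v
    using that unfolding U_def W_def Cinf_nbhd_def by auto
  have Q3: "\<rho> i (\<phi> u) \<in> \<phi> ` V \<and> \<psi> (\<rho> i (\<phi> u)) \<in> cube u0 R0"
    if "\<rho> \<in> U" "i \<in> {0..n}" "u \<in> C1" for \<rho> i u
  proof -
    have uV: "u \<in> V" using that(3) C1V by blast
    have inM: "\<rho> i (\<phi> u) \<in> M" using Diff_maps[OF UD[OF that(1,2)]] \<phi>M uV by blast
    have "norm (\<rho> i (\<phi> u) - p0) \<le> norm (\<rho> i (\<phi> u) - \<rho>0 i (\<phi> u)) + norm (\<rho>0 i (\<phi> u) - p0)"
      by (rule norm_diff_triangle_le[OF order_refl order_refl])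
    also have "\<dots> < \<delta> + \<sigma> / 2"
      using Uclose[OF that] R1c[OF that(3)[unfolded C1_def] that(2)] by simp
    also have "\<dots> \<le> \<sigma>" by (simp add: \<delta>_def)
    finally have "\<rho> i (\<phi> u) \<in> \<phi> ` V \<and> norm (\<psi> (\<rho> i (\<phi> u)) - u0) < R0" using \<sigma>(2) inM by blast
    then show ?thesis using norm_cube[of "\<psi> (\<rho> i (\<phi> u))" u0 R0] by auto
  qed
  have Q4: "norm (\<rho> i (\<phi> u) - \<rho> i (\<phi> u') - \<mu> i *\<^sub>R L (u - u')) \<le> \<eta> * norm (u - u')"
    if "\<rho> \<in> U" "i \<in> {0..n}" "u \<in> C1" "u' \<in> C1" for \<rho> i u u'
  proof -
    have bd: "norm (pd v (\<rho> i \<circ> \<phi>) w - \<mu> i *\<^sub>R pd v \<phi> u0) \<le> \<eta> / dd"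
      if w: "w \<in> cube u0 R1" and v: "v \<in> Basis" for w v
    proof -
      have wC: "w \<in> C1" using w by (simp add: C1_def)
      have "norm (pd v (\<rho> i \<circ> \<phi>) w - \<mu> i *\<^sub>R pd v \<phi> u0) \<le>
          norm (pd v (\<rho> i \<circ> \<phi>) w - pd v (\<rho>0 i \<circ> \<phi>) w) + norm (pd v (\<rho>0 i \<circ> \<phi>) w - pd v (\<rho>0 i \<circ> \<phi>) u0)"
        unfolding pd0[OF \<open>i \<in> {0..n}\<close> v, symmetric] by (rule norm_diff_triangle_le[OF order_refl order_refl])
      also have "\<dots> < \<delta> + \<eta> / (2 * dd)"
        using Uclose1[OF \<open>\<rho> \<in> U\<close> \<open>i \<in> {0..n}\<close> wC v] R1d[OF w \<open>i \<in> {0..n}\<close> v] by simp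
      also have "\<dots> \<le> \<eta> / dd" by (simp add: \<delta>_def)
      finally show ?thesis by simp
    qed
    have "norm ((\<rho> i \<circ> \<phi>) u - (\<rho> i \<circ> \<phi>) u' - (\<Sum>v\<in>Basis. ((u - u') \<bullet> v) *\<^sub>R (\<mu> i *\<^sub>R pd v \<phi> u0)))
          \<le> \<eta> / dd * DIM('d) * norm (u - u')"
      by (rule cube_est[OF Diff_smooth[OF UD[OF that(1,2)] ch] C1V[unfolded C1_def] bd])
         (use that \<eta>pos dd in \<open>auto simp: C1_def\<close>)
    moreover have "(\<Sum>v\<in>Basis. ((u - u') \<bullet> v) *\<^sub>R (\<mu> i *\<^sub>R pd v \<phi> u0)) = \<mu> i *\<^sub>R L (u - u')"
      by (simp add: L_def scaleR_sum_right mult.commute)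
    ultimately show ?thesis using dd by (simp add: dd_def)
  qed
  have Q5: "norm (\<psi> (\<rho> i (\<phi> u)) - \<psi> (\<rho> i (\<phi> u')) - \<mu> i *\<^sub>R (u - u')) \<le> \<theta> * norm (u - u')"
    if "\<rho> \<in> U" "i \<in> {0..n}" "u \<in> C1" "u' \<in> C1" for \<rho> i u u'
  proof -
    have A: "\<rho> i (\<phi> u) \<in> \<phi> ` V \<and> \<psi> (\<rho> i (\<phi> u)) \<in> cube u0 R0" using Q3[OF that(1,2,3)] .
    have B: "\<rho> i (\<phi> u') \<in> \<phi> ` V \<and> \<psi> (\<rho> i (\<phi> u')) \<in> cube u0 R0" using Q3[OF that(1,2,4)] .
    have "norm (\<psi> (\<rho> i (\<phi> u)) - \<psi> (\<rho> i (\<phi> u')) - \<mu> i *\<^sub>R (u - u')) \<le> (4 * \<eta> / c) * norm (u - u')"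
      by (rule key_est[OF linL c(1) c(2) C0est Q4[OF that]])
         (use A B \<phi>\<psi> \<eta>c \<eta>pos \<mu>bd in auto)
    then show ?thesis by (simp add: \<theta>\<eta>)
  qed
  have Q6: "norm (\<psi> (\<rho> i (\<phi> u0)) - u0) < s0" if "\<rho> \<in> U" "i \<in> {0..n}" for \<rho> i
  proof -
    have inM: "\<rho> i (\<phi> u0) \<in> M" using Diff_maps[OF UD[OF that]] \<phi>M u0 by blast
    have "norm (\<rho> i (\<phi> u0) - p0) < \<delta>" using Uclose[OF that u0C1] \<rho>0fix[OF that(2)] pu by simp
    also have "\<delta> \<le> \<sigma>'" by (simp add: \<delta>_def)
    finally show ?thesis using \<sigma>'(2) inM by blast
  qed
  define B where "B = cball u0 r"
  have BC1: "B \<subseteq> C1"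
  proof
    fix u assume "u \<in> B"
    then have "norm (u - u0) \<le> r" by (simp add: B_def dist_norm norm_minus_commute)
    then have "u \<in> cube u0 r" by (rule norm_cube)
    moreover have "r \<le> R1" using R1 kpos by (simp add: r_def field_simps)
    ultimately show "u \<in> C1" unfolding C1_def using cube_mono by blast
  qed
  define F where "F \<rho> u = \<psi> (\<rho> 0 (\<phi> u))" for \<rho> :: "nat \<Rightarrow> 'e \<Rightarrow> 'e" and u
  have i0: "(0::nat) \<in> {0..n}" by simp
  have \<mu>0: "\<mu> 0 = 1 / real k" by (simp add: \<mu>_def)
  have Fcontr: "norm (F \<rho> u - F \<rho> u') \<le> 3 / 4 * norm (u - u')"
    if "\<rho> \<in> U" "u \<in> C1" "u' \<in> C1" for \<rho> u u'
  proof -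
    have a: "norm (F \<rho> u - F \<rho> u' - (1 / real k) *\<^sub>R (u - u')) \<le> \<theta> * norm (u - u')"
      using Q5[OF that(1) i0 that(2,3)] by (simp add: F_def \<mu>0)
    have "norm (F \<rho> u - F \<rho> u') \<le> norm (F \<rho> u - F \<rho> u' - (1 / real k) *\<^sub>R (u - u')) + norm ((1 / real k) *\<^sub>R (u - u'))"
      using norm_triangle_sub[of "F \<rho> u - F \<rho> u'" "(1 / real k) *\<^sub>R (u - u')"] by simp
    also have "\<dots> \<le> \<theta> * norm (u - u') + 1 / 2 * norm (u - u')"
    proof (rule add_mono[OF a])
      have "1 / real k \<le> 1 / 2" using kpos by (simp add: field_simps)
      then have "1 / real k * norm (u - u') \<le> 1 / 2 * norm (u - u')"
        by (rule mult_right_mono) simp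
      then show "norm ((1 / real k) *\<^sub>R (u - u')) \<le> 1 / 2 * norm (u - u')"
        by simp
    qed
    also have "\<dots> \<le> 3 / 4 * norm (u - u')"
    proof -
      have "\<theta> * norm (u - u') \<le> 1 / 16 * norm (u - u')" using \<theta>16 by (rule mult_right_mono) simp
      then show ?thesis using norm_ge_zero[of "u - u'"] by linarith
    qed
    finally show ?thesis .
  qed
  have u0B: "u0 \<in> B" using rpos by (simp add: B_def)
  have Fself: "F \<rho> u \<in> B" if "\<rho> \<in> U" "u \<in> B" for \<rho> u
  proof -
    have uC: "u \<in> C1" using that(2) BC1 by blast
    have ur: "norm (u - u0) \<le> r" using that(2) by (simp add: B_def dist_norm norm_minus_commute)
    have "norm (F \<rho> u - u0) \<le> norm (F \<rho> u - F \<rho> u0) + norm (F \<rho> u0 - u0)"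
      by (rule norm_diff_triangle_le[OF order_refl order_refl])
    also have "\<dots> \<le> 3 / 4 * norm (u - u0) + s0"
      using Fcontr[OF that(1) uC u0C1] Q6[OF that(1) i0] by (simp add: F_def)
    also have "\<dots> \<le> 3 / 4 * r + r / 4" using ur by (simp add: s0_def)
    finally show ?thesis by (simp add: B_def dist_norm norm_minus_commute)
  qed
  have Funiq: "\<exists>!x. x \<in> B \<and> F \<rho> x = x" if "\<rho> \<in> U" for \<rho>
  proof -
    have "\<exists>!x\<in>B. F \<rho> x = x"
    proof (rule Banach_fix[where c="3/4"])
      show "complete B" unfolding B_def by (rule compact_imp_complete[OF compact_cball])
      show "B \<noteq> {}" using u0B by blast
      show "F \<rho> ` B \<subseteq> B" using Fself[OF that] by blast
      fix x y assume "x \<in> B" "y \<in> B"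
      then show "dist (F \<rho> x) (F \<rho> y) \<le> 3 / 4 * dist x y"
        using Fcontr[OF that] BC1 by (auto simp: dist_norm)
    qed auto
    then show ?thesis by blast
  qed
  define xf where "xf \<rho> = (THE x. x \<in> B \<and> F \<rho> x = x)" for \<rho>
  have xf: "xf \<rho> \<in> B \<and> F \<rho> (xf \<rho>) = xf \<rho>" if "\<rho> \<in> U" for \<rho>
    unfolding xf_def by (rule theI'[OF Funiq[OF that]])
  define phat where "phat \<rho> = \<phi> (xf \<rho>)" for \<rho>
  have xf0: "xf \<rho>0 = u0"
  proof -
    have "F \<rho>0 u0 = u0" using \<rho>0fix[OF i0] pu \<psi>\<phi>[OF u0] by (simp add: F_def)
    then show ?thesis using Funiq[OF \<rho>0U] xf[OF \<rho>0U] u0B by blast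
  qed
  have fixpt: "global_fixed_point n \<rho> (phat \<rho>)" if \<rho>U: "\<rho> \<in> U" for \<rho>
  proof -
    define x where "x = xf \<rho>"
    have xB: "x \<in> B" and Fx: "F \<rho> x = x" using xf[OF \<rho>U] by (auto simp: x_def)
    have xC: "x \<in> C1" using xB BC1 by blast
    have xV: "x \<in> V" using xC C1V by blast
    have xr: "norm (x - u0) \<le> r" using xB by (simp add: B_def dist_norm norm_minus_commute)
    have a_fix: "\<rho> 0 (\<phi> x) = \<phi> x"
    proof -
      have "\<rho> 0 (\<phi> x) = \<phi> (\<psi> (\<rho> 0 (\<phi> x)))" using Q3[OF \<rho>U i0 xC] \<phi>\<psi> by simp
      also have "\<dots> = \<phi> x" using Fx by (simp add: F_def)
      finally show ?thesis .
    qed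
    have b_fix: "\<rho> i (\<phi> x) = \<phi> x" if i: "i \<in> {1..n}" for i
    proof -
      have i': "i \<in> {0..n}" using i by auto
      have \<mu>i: "\<mu> i = 1" using i by (simp add: \<mu>_def)
      define G where "G u = \<psi> (\<rho> i (\<phi> u))" for u
      have Gest: "norm (G u - G u' - (u - u')) \<le> \<theta> * norm (u - u')" if "u \<in> C1" "u' \<in> C1" for u u'
        using Q5[OF \<rho>U i' that] by (simp add: G_def \<mu>i)
      have Fest: "norm (F \<rho> u - F \<rho> u' - (1 / real k) *\<^sub>R (u - u')) \<le> \<theta> * norm (u - u')"
        if "u \<in> C1" "u' \<in> C1" for u u'
        using Q5[OF \<rho>U i0 that] by (simp add: F_def \<mu>0)
      have Gxx: "norm (G x - x) \<le> r"
      proof -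
        have "G x - x = (G x - G u0 - (x - u0)) + (G u0 - u0)" by simp
        then have "norm (G x - x) \<le> norm (G x - G u0 - (x - u0)) + norm (G u0 - u0)"
          by (metis norm_triangle_ineq)
        also have "\<dots> \<le> \<theta> * norm (x - u0) + s0"
          using Gest[OF xC u0C1] Q6[OF \<rho>U i'] by (simp add: G_def add_mono less_imp_le)
        also have "\<theta> * norm (x - u0) \<le> 1 / 16 * r"
          using \<theta>16 xr \<theta>0 by (meson mult_mono norm_ge_zero order_trans zero_le_divide_1_iff zero_le_numeral)
        finally show ?thesis using rpos by (simp add: s0_def)
      qed
      have ball: "cball x (2 * real k * norm (G x - x)) \<subseteq> C1"
      proof
        fix z assume "z \<in> cball x (2 * real k * norm (G x - x))"
        then have "norm (z - x) \<le> 2 * real k * norm (G x - x)" by (simp add: dist_norm norm_minus_commute)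
        also have "\<dots> \<le> 2 * real k * r" using Gxx kpos by simp
        finally have "norm (z - u0) \<le> 2 * real k * r + r" using xr norm_diff_triangle_le by blast
        also have "\<dots> \<le> R1"
        proof -
          have "2 * real k * r + r \<le> 3 * real k * r" using kpos rpos by (simp add: algebra_simps)
          also have "\<dots> = 3 / 16 * R1" using kpos by (simp add: r_def)
          finally show ?thesis using R1 by simp
        qed
        finally show "z \<in> C1" unfolding C1_def by (rule norm_cube)
      qed
      have rel: "F \<rho> (G x) = (G ^^ k) x" if allS: "\<forall>j\<le>k. (G ^^ j) x \<in> C1"
      proof -
        have it: "\<phi> ((G ^^ j) x) = (\<rho> i ^^ j) (\<phi> x)" if "j \<le> k" for j
          using that
        proof (induction j)
          case 0 then show ?case by simp
        next
          case (Suc j)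
          then have jC: "(G ^^ j) x \<in> C1" using allS by simp
          have "\<phi> ((G ^^ Suc j) x) = \<phi> (\<psi> (\<rho> i (\<phi> ((G ^^ j) x))))" by (simp add: G_def)
          also have "\<dots> = \<rho> i (\<phi> ((G ^^ j) x))" using Q3[OF \<rho>U i' jC] \<phi>\<psi> by simp
          also have "\<dots> = (\<rho> i ^^ Suc j) (\<phi> x)" using Suc by simp
          finally show ?case .
        qed
        have kC: "(G ^^ k) x \<in> C1" using allS by simp
        have rel0: "\<rho> 0 \<circ> \<rho> i = (\<rho> i ^^ k) \<circ> \<rho> 0"
          using Hom_topspace(2)[OF subsetD[OF Utop \<rho>U] i] .
        have "F \<rho> (G x) = \<psi> (\<rho> 0 (\<phi> (G x)))" by (simp add: F_def)
        also have "\<phi> (G x) = \<rho> i (\<phi> x)" using it[of 1] assms(2) by simp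
        also have "\<rho> 0 (\<rho> i (\<phi> x)) = (\<rho> i ^^ k) (\<rho> 0 (\<phi> x))" using rel0 by (metis comp_apply)
        also have "\<dots> = (\<rho> i ^^ k) (\<phi> x)" using a_fix by simp
        also have "\<dots> = \<phi> ((G ^^ k) x)" using it[of k] by simp
        also have "\<psi> (\<phi> ((G ^^ k) x)) = (G ^^ k) x" using \<psi>\<phi> kC C1V by blast
        finally show ?thesis .
      qed
      have "G x = x \<and> (\<forall>j\<le>k. (G ^^ j) x \<in> C1)"
        by (rule iter_fix[OF Gest Fest xC Fx ball rel assms(2) \<theta>0]) (simp_all add: \<theta>_def)
      then have "G x = x" by blast
      then have "\<phi> (\<psi> (\<rho> i (\<phi> x))) = \<phi> x" by (simp add: G_def)
      then show ?thesis using Q3[OF \<rho>U i' xC] \<phi>\<psi> by simp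
    qed
    show ?thesis unfolding global_fixed_point_def phat_def x_def[symmetric]
    proof
      fix i assume "i \<in> {0..n}"
      then show "\<rho> i (\<phi> x) = \<phi> x"
        using a_fix b_fix by (cases "i = 0") auto
    qed
  qed
  have cont: "continuous_map (subtopology (Hom_top TYPE('d) M n k) U) (top_of_set M) phat"
  proof (rule cont_crit)
    have tsp: "topspace (subtopology (Hom_top TYPE('d) M n k) U) = U" using Utop by auto
    fix \<rho> assume "\<rho> \<in> topspace (subtopology (Hom_top TYPE('d) M n k) U)"
    then have \<rho>U: "\<rho> \<in> U" using tsp by simp
    have "xf \<rho> \<in> V" using xf[OF \<rho>U] BC1 C1V by blast
    then show "phat \<rho> \<in> M" using \<phi>M by (auto simp: phat_def)
  next
    have tsp: "topspace (subtopology (Hom_top TYPE('d) M n k) U) = U" using Utop by auto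
    fix \<rho> and e :: real assume "\<rho> \<in> topspace (subtopology (Hom_top TYPE('d) M n k) U)" and e: "e > 0"
    then have \<rho>U: "\<rho> \<in> U" using tsp by simp
    define x where "x = xf \<rho>"
    have xB: "x \<in> B" and Fx: "F \<rho> x = x" using xf[OF \<rho>U] by (auto simp: x_def)
    have xC: "x \<in> C1" using xB BC1 by blast
    have xV: "x \<in> V" using xC C1V by blast
    obtain \<gamma> where \<gamma>: "\<gamma> > 0" "\<forall>w. norm (w - x) < \<gamma> \<longrightarrow> w \<in> V \<and> norm (\<phi> w - \<phi> x) < e"
      using cont_eps[OF cont\<phi> opV xV e] by blast
    define \<delta>2 where "\<delta>2 = c * \<gamma> / 16"
    have \<delta>2: "\<delta>2 > 0" using c \<gamma> by (simp add: \<delta>2_def)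
    define Wd where "Wd = Diff TYPE('d) M \<inter> Cinf_nbhd M (\<rho> 0) \<phi> C1 [] \<delta>2"
    define W' where "W' j = (if j = 0 then Wd else topspace (Diff_top TYPE('d) M))" for j :: nat
    define T where "T = U \<inter> {\<rho>' \<in> topspace (Hom_top TYPE('d) M n k). \<forall>j\<in>{0..n}. \<rho>' j \<in> W' j}"
    have oWd: "openin (Diff_top TYPE('d) M) Wd"
      unfolding Wd_def by (rule Diff_open_nbhd[OF UD[OF \<rho>U i0] ch cC1 C1V _ \<delta>2]) simp
    have oT0: "openin (Hom_top TYPE('d) M n k) {\<rho>' \<in> topspace (Hom_top TYPE('d) M n k). \<forall>j\<in>{0..n}. \<rho>' j \<in> W' j}"
      by (rule Hom_open) (use oWd in \<open>auto simp: W'_def\<close>)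
    have oT: "openin (subtopology (Hom_top TYPE('d) M n k) U) T"
      unfolding openin_open_subtopology[OF Uopen] T_def using Uopen oT0 by auto
    have \<rho>T: "\<rho> \<in> T"
      unfolding T_def W'_def Wd_def
      using \<rho>U Utop UD[OF \<rho>U i0] self_nbhd[OF \<delta>2] Hom_topspace(3)[OF subsetD[OF Utop \<rho>U]] by auto
    have close: "dist (phat \<rho>') (phat \<rho>) < e" if \<rho>'T: "\<rho>' \<in> T" for \<rho>'
    proof -
      have \<rho>'U: "\<rho>' \<in> U" using \<rho>'T by (simp add: T_def)
      have \<rho>'0: "\<rho>' 0 \<in> Wd" using \<rho>'T i0 unfolding T_def W'_def by fastforce
      define x' where "x' = xf \<rho>'"
      have x'B: "x' \<in> B" and Fx': "F \<rho>' x' = x'" using xf[OF \<rho>'U] by (auto simp: x'_def)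
      have x'C: "x' \<in> C1" using x'B BC1 by blast
      have "norm (F \<rho>' x - F \<rho> x) \<le> 2 * \<delta>2 / c"
      proof -
        define w where "w = F \<rho>' x"
        define w' where "w' = F \<rho> x"
        have A: "\<rho>' 0 (\<phi> x) \<in> \<phi> ` V \<and> w \<in> cube u0 R0" using Q3[OF \<rho>'U i0 xC] by (simp add: w_def F_def)
        have B': "\<rho> 0 (\<phi> x) \<in> \<phi> ` V \<and> w' \<in> cube u0 R0" using Q3[OF \<rho>U i0 xC] by (simp add: w'_def F_def)
        have "\<phi> w - \<phi> w' = \<rho>' 0 (\<phi> x) - \<rho> 0 (\<phi> x)" using A B' \<phi>\<psi> by (simp add: w_def w'_def F_def)
        moreover have "norm (\<rho>' 0 (\<phi> x) - \<rho> 0 (\<phi> x)) < \<delta>2"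
          using \<rho>'0 xC by (auto simp: Wd_def Cinf_nbhd_def)
        ultimately have n1: "norm (\<phi> w - \<phi> w') < \<delta>2" by simp
        have n2: "norm (\<phi> w - \<phi> w' - L (w - w')) \<le> \<eta> * norm (w - w')" using C0est A B' by blast
        have "c * norm (w - w') \<le> norm (L (w - w'))" by (rule c(2))
        also have "\<dots> \<le> norm (\<phi> w - \<phi> w') + norm (\<phi> w - \<phi> w' - L (w - w'))"
          using norm_triangle_sub[of "L (w - w')" "\<phi> w - \<phi> w'"] by (simp add: norm_minus_commute)
        finally have "c * norm (w - w') \<le> \<delta>2 + \<eta> * norm (w - w')" using n1 n2 by linarith
        moreover have "\<eta> * norm (w - w') \<le> c / 2 * norm (w - w')" using \<eta>c by (rule mult_right_mono) simp
        ultimately have "c / 2 * norm (w - w') \<le> \<delta>2" by linarith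
        then show ?thesis using c by (simp add: w_def w'_def field_simps)
      qed
      moreover have "norm (x' - x) \<le> norm (F \<rho>' x' - F \<rho>' x) + norm (F \<rho>' x - F \<rho> x)"
      proof -
        have "norm (F \<rho>' x' - F \<rho> x) \<le> norm (F \<rho>' x' - F \<rho>' x) + norm (F \<rho>' x - F \<rho> x)"
          by (rule norm_diff_triangle_le[OF order_refl order_refl])
        then show ?thesis by (simp only: Fx Fx')
      qed
      moreover have "norm (F \<rho>' x' - F \<rho>' x) \<le> 3 / 4 * norm (x' - x)" by (rule Fcontr[OF \<rho>'U x'C xC])
      ultimately have "1 / 4 * norm (x' - x) \<le> 2 * \<delta>2 / c" by linarith
      then have "norm (x' - x) \<le> 8 * \<delta>2 / c" by simp
      also have "\<dots> < \<gamma>" using c \<gamma> by (simp add: \<delta>2_def)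
      finally have "norm (\<phi> x' - \<phi> x) < e" using \<gamma>(2) by blast
      then show ?thesis by (simp add: phat_def x_def x'_def dist_norm)
    qed
    show "\<exists>T. openin (subtopology (Hom_top TYPE('d) M n k) U) T \<and> \<rho> \<in> T \<and> (\<forall>y\<in>T. dist (phat y) (phat \<rho>) < e)"
      using oT \<rho>T close by blast
  qed
  have ph0: "phat \<rho>0 = p0" using xf0 pu by (simp add: phat_def)
  show ?thesis
    using Uopen \<rho>0U cont fixpt ph0 by blast
qed

end
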